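(* Every finitely generated centrally endo-AIP $\mathbb{Z}$-module is torsion-free or semisimple.
   Context: For a module $M$ with $S=\mathrm{End}(M)$ and $N\le M$, $l_S(N)=\{\phi\in S:\phi(N)=0\}$. An ideal $I$ of $S$ is centrally s-unital if for every $a\in I$ there is $z\in I$ central in $S$ with $az=a$. $M$ is centrally endo-AIP if $l_S(N)$ is a centrally s-unital ideal of $S$ for every fully invariant submodule $N$ of $M$. *)

theory Defs
  imports Main "HOL.Modules"
begin

text \<open>A Z-module is modelled as an abelian group type 'b together with a
scalar multiplication s :: int => 'b => 'b satisfying the module axioms
(the library locale module). The whole type is the module M.
End(M) = the Z-linear maps 'b => 'b (module_hom s s), with multiplication
given by composition.\<close>

definition endo :: "(int \<Rightarrow> 'b::ab_group_add \<Rightarrow> 'b) \<Rightarrow> ('b \<Rightarrow> 'b) set" where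
  "endo s = {f. module_hom s s f}"

definition fully_invariant :: "(int \<Rightarrow> 'b::ab_group_add \<Rightarrow> 'b) \<Rightarrow> 'b set \<Rightarrow> bool" where
  "fully_invariant s N \<longleftrightarrow> module.subspace s N \<and> (\<forall>f \<in> endo s. f ` N \<subseteq> N)"

text \<open>left annihilator l_S(N)\<close>
definition lann :: "(int \<Rightarrow> 'b::ab_group_add \<Rightarrow> 'b) \<Rightarrow> 'b set \<Rightarrow> ('b \<Rightarrow> 'b) set" where
  "lann s N = {\<phi> \<in> endo s. \<forall>x \<in> N. \<phi> x = 0}"

definition endo_ideal :: "(int \<Rightarrow> 'b::ab_group_add \<Rightarrow> 'b) \<Rightarrow> ('b \<Rightarrow> 'b) set \<Rightarrow> bool" where
  "endo_ideal s I \<longleftrightarrow> I \<subseteq> endo s \<and> (\<lambda>x. 0) \<in> I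
     \<and> (\<forall>a \<in> I. \<forall>b \<in> I. (\<lambda>x. a x - b x) \<in> I)
     \<and> (\<forall>a \<in> I. \<forall>t \<in> endo s. t \<circ> a \<in> I \<and> a \<circ> t \<in> I)"

definition endo_central :: "(int \<Rightarrow> 'b::ab_group_add \<Rightarrow> 'b) \<Rightarrow> ('b \<Rightarrow> 'b) \<Rightarrow> bool" where
  "endo_central s z \<longleftrightarrow> z \<in> endo s \<and> (\<forall>t \<in> endo s. z \<circ> t = t \<circ> z)"

definition centrally_s_unital :: "(int \<Rightarrow> 'b::ab_group_add \<Rightarrow> 'b) \<Rightarrow> ('b \<Rightarrow> 'b) set \<Rightarrow> bool" where
  "centrally_s_unital s I \<longleftrightarrow> endo_ideal s I \<and>
     (\<forall>a \<in> I. \<exists>z \<in> I. endo_central s z \<and> a \<circ> z = a)"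

definition centrally_endo_AIP :: "(int \<Rightarrow> 'b::ab_group_add \<Rightarrow> 'b) \<Rightarrow> bool" where
  "centrally_endo_AIP s \<longleftrightarrow> (\<forall>N. fully_invariant s N \<longrightarrow> centrally_s_unital s (lann s N))"

definition fin_gen :: "(int \<Rightarrow> 'b::ab_group_add \<Rightarrow> 'b) \<Rightarrow> bool" where
  "fin_gen s \<longleftrightarrow> (\<exists>F. finite F \<and> module.span s F = UNIV)"

definition torsion_free :: "(int \<Rightarrow> 'b::ab_group_add \<Rightarrow> 'b) \<Rightarrow> bool" where
  "torsion_free s \<longleftrightarrow> (\<forall>r x. r \<noteq> 0 \<longrightarrow> s r x = 0 \<longrightarrow> x = 0)"

text \<open>semisimple: every submodule is a direct summand\<close>
definition semisimple :: "(int \<Rightarrow> 'b::ab_group_add \<Rightarrow> 'b) \<Rightarrow> bool" where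
  "semisimple s \<longleftrightarrow> (\<forall>N. module.subspace s N \<longrightarrow>
     (\<exists>K. module.subspace s K \<and> N \<inter> K = {0} \<and> {n + k | n k. n \<in> N \<and> k \<in> K} = UNIV))"

end

theory Submission imports Defs "HOL-Computational_Algebra.Primes" begin

lemma chain_union_subspace:
  fixes s :: "int \<Rightarrow> 'b::ab_group_add \<Rightarrow> 'b"
  assumes "module s" "C \<noteq> {}" "\<forall>X\<in>C. module.subspace s X"
    "\<forall>X\<in>C. \<forall>Y\<in>C. X \<subseteq> Y \<or> Y \<subseteq> X"
  shows "module.subspace s (\<Union>C)"
proof -
  interpret M: module s by fact
  show ?thesis
  proof (rule M.subspaceI)
    show "0 \<in> \<Union>C" using assms(2,3) M.subspace_0 by blast
  next
    fix x y assume "x \<in> \<Union>C" "y \<in> \<Union>C"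
    then obtain X Y where "X \<in> C" "Y \<in> C" "x \<in> X" "y \<in> Y" by blast
    then show "x + y \<in> \<Union>C" using assms(3,4) M.subspace_add
      by (metis UnionI subsetD)
  next
    fix c x assume "x \<in> \<Union>C"
    then show "s c x \<in> \<Union>C" using assms(3) M.subspace_scale by blast
  qed
qed

lemma bez_step:
  fixes s :: "int \<Rightarrow> 'b::ab_group_add \<Rightarrow> 'b"
  assumes "module s" "module.subspace s L" "prime p" "\<not> p dvd j"
    "s j x \<in> L" "s p x \<in> L"
  shows "x \<in> L"
proof -
  interpret M: module s by fact
  have "coprime p j" using assms(3,4) prime_imp_coprime by blast
  then obtain u v where uv: "u * p + v * j = 1"
    by (metis bezout_int coprime_iff_gcd_eq_1)
  have "x = s (u * p + v * j) x" using uv by simp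
  also have "\<dots> = s u (s p x) + s v (s j x)" by (simp add: M.scale_left_distrib)
  finally show ?thesis using assms(2,5,6) M.subspace_add M.subspace_scale by metis
qed

lemma nakayama:
  fixes s :: "int \<Rightarrow> 'b::ab_group_add \<Rightarrow> 'b"
  assumes "module s" "finite G"
  shows "module.subspace s L \<Longrightarrow> (\<forall>x\<in>G. \<exists>y\<in>module.span s G. x - s p y \<in> L)
     \<Longrightarrow> \<exists>k. \<forall>x\<in>G. s (1 + p * k) x \<in> L"
  using assms(2)
proof (induction G arbitrary: L rule: finite_induct)
  case empty
  then show ?case by simp
next
  case (insert g G)
  interpret M: module s by fact
  define L' where "L' = M.span (insert g L)"
  have L'sub: "M.subspace L'" unfolding L'_def by simp
  have LL': "L \<subseteq> L'" unfolding L'_def by (meson M.span_superset subset_insertI subset_trans)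
  have gL': "g \<in> L'" unfolding L'_def by (simp add: M.span_base)
  have spanL: "M.span L = L" using insert.prems(1) by simp
  have "\<forall>x\<in>G. \<exists>y\<in>M.span G. x - s p y \<in> L'"
  proof
    fix x assume "x \<in> G"
    then obtain y where y: "y \<in> M.span (insert g G)" "x - s p y \<in> L" using insert.prems(2) by blast
    then obtain c where c: "y - s c g \<in> M.span G" using M.span_breakdown_eq by blast
    have "x - s p (y - s c g) = (x - s p y) + s (p * c) g" by (simp add: algebra_simps M.scale_right_diff_distrib)
    also have "\<dots> \<in> L'" using y(2) LL' gL' L'sub M.subspace_add M.subspace_scale by blast
    finally show "\<exists>y\<in>M.span G. x - s p y \<in> L'" using c by blast
  qed
  then obtain k' where k': "\<forall>x\<in>G. s (1 + p * k') x \<in> L'" using insert.IH L'sub by blast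
  define a' where "a' = 1 + p * k'"
  have spanG: "\<forall>y\<in>M.span G. s a' y \<in> L'"
  proof -
    have "M.subspace {y. s a' y \<in> L'}"
      using M.module_hom_scale_self module_hom.subspace_linear_preimage L'sub by blast
    moreover have "G \<subseteq> {y. s a' y \<in> L'}" using k' a'_def by auto
    ultimately show ?thesis using M.span_minimal by blast
  qed
  obtain y where y: "y \<in> M.span (insert g G)" "g - s p y \<in> L" using insert.prems(2) by blast
  then obtain c where c: "y - s c g \<in> M.span G" using M.span_breakdown_eq by blast
  have "s a' (y - s c g) \<in> L'" using spanG c by blast
  then obtain d where d: "s a' (y - s c g) - s d g \<in> L"
    unfolding L'_def using M.span_breakdown_eq spanL by blast
  define b where "b = a' - p * (d + a' * c)"
  have "s b g = s a' (g - s p y) + s p (s a' (y - s c g) - s d g)"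
    unfolding b_def by (simp add: algebra_simps M.scale_right_diff_distrib M.scale_left_diff_distrib)
  then have bg: "s b g \<in> L" using y(2) d insert.prems(1) M.subspace_add M.subspace_scale by metis
  define k where "k = (k' - d - a' * c) + k' + p * (k' - d - a' * c) * k'"
  have ak: "b * a' = 1 + p * k" unfolding k_def b_def a'_def by (simp add: algebra_simps)
  have "\<forall>x\<in>insert g G. s (b * a') x \<in> L"
  proof
    fix x assume "x \<in> insert g G"
    then show "s (b * a') x \<in> L"
    proof
      assume "x = g"
      then show ?thesis using bg insert.prems(1) M.subspace_scale
        by (metis M.scale_scale mult.commute)
    next
      assume "x \<in> G"
      then have "s a' x \<in> L'" using k' a'_def by blast
      then obtain e where e: "s a' x - s e g \<in> L"
        unfolding L'_def using M.span_breakdown_eq spanL by blast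
      have "s (b * a') x = s b (s a' x - s e g) + s e (s b g)"
        by (simp add: algebra_simps M.scale_right_diff_distrib)
      then show ?thesis using e bg insert.prems(1) M.subspace_add M.subspace_scale by metis
    qed
  qed
  then show ?case using ak by metis
qed


lemma ker_fi:
  fixes s :: "int \<Rightarrow> 'b::ab_group_add \<Rightarrow> 'b"
  assumes "module s"
  shows "fully_invariant s {y. s n y = 0}"
proof -
  interpret M: module s by fact
  define N where "N = {y. s n y = 0}"
  have hn: "module_hom s s (\<lambda>y. s n y)" by simp
  have "M.subspace N" unfolding N_def using module_hom.subspace_kernel[OF hn] .
  moreover have "\<forall>f\<in>endo s. f ` N \<subseteq> N"
  proof (intro ballI subsetI)
    fix f y assume f: "f \<in> endo s" and y: "y \<in> f ` N"
    then have fh: "module_hom s s f" unfolding endo_def by simp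
    from y obtain u where u: "u \<in> N" "y = f u" by blast
    have "s n y = f (s n u)" using module_hom.scale[OF fh] u by simp
    also have "\<dots> = 0" using u(1) module_hom.zero[OF fh] unfolding N_def by simp
    finally show "y \<in> N" unfolding N_def by simp
  qed
  ultimately show ?thesis unfolding fully_invariant_def N_def by simp
qed

lemma all_torsion:
  fixes s :: "int \<Rightarrow> 'b::ab_group_add \<Rightarrow> 'b"
  assumes ms: "module s" and fg: "fin_gen s" and aip: "centrally_endo_AIP s"
    and pp: "prime p" and t0: "t \<noteq> 0" and pt: "s p t = 0"
  shows "\<exists>n. n \<noteq> 0 \<and> s n w = 0"
proof (rule ccontr)
  assume "\<not> (\<exists>n. n \<noteq> 0 \<and> s n w = 0)"
  then have inf: "\<And>n. n \<noteq> 0 \<Longrightarrow> s n w \<noteq> 0" by blast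
  interpret M: module s by fact
  define N where "N = {y. s p y = 0}"
  have "fully_invariant s N" unfolding N_def by (rule ker_fi[OF ms])
  then have cs: "centrally_s_unital s (lann s N)" using aip unfolding centrally_endo_AIP_def by blast
  have "(\<lambda>y. s p y) \<in> lann s N" unfolding lann_def endo_def N_def by simp
  then obtain z where z: "z \<in> lann s N" "endo_central s z" "(\<lambda>y. s p y) \<circ> z = (\<lambda>y. s p y)"
    using cs unfolding centrally_s_unital_def by blast
  have zh: "module_hom s s z" using z(1) unfolding lann_def endo_def by simp
  have zp: "\<And>y. s p (z y) = s p y" using z(3) by (metis comp_apply)
  have zN: "\<And>y. s p y = 0 \<Longrightarrow> z y = 0" using z(1) unfolding lann_def N_def by blast
  have idem: "\<And>y. z (z y) = z y"
  proof -
    fix y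
    have "s p (z y - y) = 0" using zp[of y] by (simp add: M.scale_right_diff_distrib)
    then have "z (z y - y) = 0" by (rule zN)
    then show "z (z y) = z y" using module_hom.diff[OF zh] by simp
  qed
  have "\<exists>q \<in> range z. \<forall>y. q \<noteq> s p y"
  proof (rule ccontr)
    assume "\<not> ?thesis"
    then have dv: "\<And>q. q \<in> range z \<Longrightarrow> \<exists>y. q = s p y" by blast
    obtain F where F: "finite F" "M.span F = UNIV" using fg unfolding fin_gen_def by blast
    define G where "G = z ` F"
    have spG: "M.span G = range z" unfolding G_def using module_hom.span_image[OF zh] F(2) by simp
    have "\<forall>x\<in>G. \<exists>y\<in>M.span G. x - s p y \<in> {0}"
    proof
      fix x assume "x \<in> G"
      then have "x \<in> range z" unfolding G_def by blast
      then obtain x0 where x0: "x = z x0" by blast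
      obtain y0 where "x = s p y0" using dv \<open>x \<in> range z\<close> by blast
      have zx: "z x = x" using x0 idem by simp
      have "x = z (s p y0)" using zx \<open>x = s p y0\<close> by simp
      also have "\<dots> = s p (z y0)" by (rule module_hom.scale[OF zh])
      finally have "x = s p (z y0)" .
      then show "\<exists>y\<in>M.span G. x - s p y \<in> {0}" using spG by auto
    qed
    moreover have "finite G" using F(1) G_def by simp
    ultimately obtain k where k: "\<forall>x\<in>G. s (1 + p * k) x \<in> {0}"
      using nakayama[OF ms \<open>finite G\<close> M.subspace_single_0] by blast
    define a where "a = 1 + p * k"
    have "\<forall>x\<in>M.span G. s a x = 0"
    proof -
      have "M.subspace {x. s a x = 0}" using module_hom.subspace_kernel[OF M.module_hom_scale_self[of a]] by simp
      moreover have "G \<subseteq> {x. s a x = 0}" using k a_def by auto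
      ultimately show ?thesis using M.span_minimal by blast
    qed
    then have "s a (z w) = 0" using spG by blast
    then have "s (p * a) w = 0"
    proof -
      assume h: "s a (z w) = 0"
      have "s (p * a) w = s a (s p w)" by (simp add: mult.commute)
      also have "\<dots> = s a (s p (z w))" using zp[of w] by simp
      also have "\<dots> = s p (s a (z w))" by (simp add: mult.commute)
      finally show ?thesis using h by simp
    qed
    moreover have "p * a \<noteq> 0"
    proof -
      have "p \<noteq> 0" using pp by auto
      moreover have "a \<noteq> 0"
      proof
        assume "a = 0"
        then have "p dvd 1" 
        proof -
          assume "a = 0"
          then have "1 = p * (- k)" unfolding a_def by (simp add: algebra_simps)
          then show ?thesis by (metis dvd_triv_left)
        qed
        then show False using pp not_prime_unit by blast
      qed
      ultimately show ?thesis by simp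
    qed
    ultimately show False using inf by blast
  qed
  then obtain q where q: "q \<in> range z" "\<And>y. q \<noteq> s p y" by blast
  have zq: "z q = q" using q(1) idem by auto
  define A where "A = {L. M.subspace L \<and> range (s p) \<subseteq> L \<and> q \<notin> L}"
  have "range (s p) \<in> A"
    unfolding A_def using module_hom.subspace_image[of s s "\<lambda>y. s p y" UNIV] q(2) by auto
  then have "A \<noteq> {}" by blast
  moreover have "\<And>C. C \<noteq> {} \<Longrightarrow> subset.chain A C \<Longrightarrow> \<Union>C \<in> A"
  proof -
    fix C assume C: "C \<noteq> {}" "subset.chain A C"
    then have "C \<subseteq> A" "\<forall>X\<in>C. \<forall>Y\<in>C. X \<subseteq> Y \<or> Y \<subseteq> X" unfolding subset_chain_def by auto
    then have "M.subspace (\<Union>C)" using chain_union_subspace[OF ms C(1)] unfolding A_def by blast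
    then show "\<Union>C \<in> A" using C(1) \<open>C \<subseteq> A\<close> unfolding A_def by blast
  qed
  ultimately obtain L where L: "L \<in> A" "\<And>X. X \<in> A \<Longrightarrow> L \<subseteq> X \<Longrightarrow> X = L"
    using subset_Zorn_nonempty[of A] by blast
  have Ls: "M.subspace L" and Lr: "range (s p) \<subseteq> L" and qL: "q \<notin> L" using L(1) unfolding A_def by auto
  have spanL: "M.span L = L" using Ls by simp
  have key: "\<And>y. \<exists>j. y - s j q \<in> L"
  proof -
    fix y
    show "\<exists>j. y - s j q \<in> L"
    proof (cases "y \<in> L")
      case True then show ?thesis by (metis M.scale_zero_left diff_zero)
    next
      case False
      define L2 where "L2 = M.span (insert y L)"
      have "M.subspace L2" unfolding L2_def by simp
      moreover have "L \<subseteq> L2" unfolding L2_def by (meson M.span_superset subset_insertI subset_trans)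
      moreover have "y \<in> L2" unfolding L2_def by (simp add: M.span_base)
      ultimately have "L2 \<notin> A" using L(2) False Lr by (metis A_def mem_Collect_eq subset_trans)
      then have "q \<in> L2" unfolding A_def using \<open>M.subspace L2\<close> \<open>L \<subseteq> L2\<close> Lr by blast
      then obtain c where c: "q - s c y \<in> L" unfolding L2_def using M.span_breakdown_eq spanL by blast
      have "\<not> p dvd c"
      proof
        assume "p dvd c"
        then obtain c' where "c = p * c'" by blast
        then have "s c y \<in> L" using Lr by (metis M.scale_scale mult.commute rangeI subsetD)
        then have "(q - s c y) + s c y \<in> L" using c Ls M.subspace_add by blast
        then show False using qL by simp
      qed
      then have "coprime p c" using pp prime_imp_coprime by blast
      then obtain u v where uv: "u * p + v * c = 1" by (metis bezout_int coprime_iff_gcd_eq_1)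
      have "s u (s p y) - s v (q - s c y) = s (u * p + v * c) y - s v q"
        by (simp add: M.scale_left_distrib M.scale_right_diff_distrib algebra_simps)
      then have "y - s v q = s u (s p y) - s v (q - s c y)" using uv by simp
      moreover have "s u (s p y) - s v (q - s c y) \<in> L"
        using Lr c Ls M.subspace_diff M.subspace_scale by (metis rangeI subsetD)
      ultimately show ?thesis by metis
    qed
  qed
  have uniq: "\<And>y j j'. y - s j q \<in> L \<Longrightarrow> y - s j' q \<in> L \<Longrightarrow> s j t = s j' t"
  proof -
    fix y j j' assume a: "y - s j q \<in> L" "y - s j' q \<in> L"
    have "(y - s j' q) - (y - s j q) \<in> L" using a Ls M.subspace_diff by blast
    then have "s (j - j') q \<in> L" by (simp add: M.scale_left_diff_distrib)
    have "p dvd (j - j')"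
    proof (rule ccontr)
      assume "\<not> p dvd (j - j')"
      then have "q \<in> L" using bez_step[OF ms Ls pp] \<open>s (j - j') q \<in> L\<close> Lr by blast
      then show False using qL by blast
    qed
    then obtain r where "j - j' = p * r" by blast
    then have "s (j - j') t = 0" using pt by (metis M.scale_scale M.scale_zero_right mult.commute)
    then show "s j t = s j' t" by (simp add: M.scale_left_diff_distrib)
  qed
  define phi where "phi = (\<lambda>y. SOME j. y - s j q \<in> L)"
  have phi: "\<And>y. y - s (phi y) q \<in> L" unfolding phi_def using key by (metis someI_ex)
  define g where "g = (\<lambda>y. s (phi y) t)"
  have gadd: "\<And>x y. g (x + y) = g x + g y"
  proof -
    fix x y
    have "(x - s (phi x) q) + (y - s (phi y) q) \<in> L" using phi Ls M.subspace_add by blast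
    then have "(x + y) - s (phi x + phi y) q \<in> L" by (simp add: M.scale_left_distrib algebra_simps)
    then have "s (phi (x + y)) t = s (phi x + phi y) t" using uniq phi by blast
    then show "g (x + y) = g x + g y" unfolding g_def by (simp add: M.scale_left_distrib)
  qed
  have gsc: "\<And>r x. g (s r x) = s r (g x)"
  proof -
    fix r x
    have "s r (x - s (phi x) q) \<in> L" using phi Ls M.subspace_scale by blast
    then have "s r x - s (r * phi x) q \<in> L" by (simp add: M.scale_right_diff_distrib)
    then have "s (phi (s r x)) t = s (r * phi x) t" using uniq phi by blast
    then show "g (s r x) = s r (g x)" unfolding g_def by simp
  qed
  have gh: "g \<in> endo s" unfolding endo_def using gadd gsc ms by (simp add: module_hom_iff)
  have "q - s 1 q \<in> L" using Ls M.subspace_0 by simp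
  then have gq: "g q = t" unfolding g_def using uniq phi by (metis M.scale_one)
  have "z (g q) = g (z q)" using z(2) gh unfolding endo_central_def by (metis comp_apply)
  then have "z t = t" using gq zq by simp
  moreover have "z t = 0" using zN pt by blast
  ultimately show False using t0 by simp
qed


lemma prime_mult:
  fixes s :: "int \<Rightarrow> 'b::ab_group_add \<Rightarrow> 'b"
  assumes "module s" "module.subspace s L" "x \<notin> L" "m \<noteq> 0" "s m x \<in> L"
  shows "\<exists>p e. prime p \<and> s e x \<notin> L \<and> s p (s e x) \<in> L"
proof -
  interpret M: module s by fact
  define P where "P = (\<lambda>d::nat. d > 0 \<and> s (int d) x \<in> L)"
  have "s \<bar>m\<bar> x \<in> L"
  proof (cases "m \<ge> 0")
    case True then show ?thesis using assms(5) by simp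
  next
    case False
    then have "s \<bar>m\<bar> x = - s m x" using M.scale_minus_left[of m x] by simp
    then show ?thesis using assms(2,5) M.subspace_neg by metis
  qed
  then have "P (nat \<bar>m\<bar>)" using assms(4) unfolding P_def by simp
  define d where "d = (LEAST d. P d)"
  have Pd: "P d" unfolding d_def by (rule LeastI) fact
  have mind: "\<And>e. e < d \<Longrightarrow> \<not> P e" unfolding d_def using not_less_Least by blast
  have "d \<noteq> 1"
  proof
    assume "d = 1"
    then have "s 1 x \<in> L" using Pd unfolding P_def by simp
    then show False using assms(3) by simp
  qed
  then obtain p where p: "prime p" "p dvd d" using prime_factor_nat by blast
  then obtain e where e: "d = p * e" by blast
  have d0: "d > 0" using Pd unfolding P_def by blast
  have "e > 0" using d0 e by (cases "e = 0") auto
  have p1: "1 < p" using p(1) prime_gt_1_nat by blast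
  have "1 * e < p * e" using mult_less_mono1[OF p1 \<open>e > 0\<close>] .
  then have "e < d" using e by simp
  then have "\<not> P e" using mind by blast
  then have "s (int e) x \<notin> L" using \<open>e > 0\<close> unfolding P_def by blast
  moreover have "s (int p) (s (int e) x) = s (int d) x" using e by (simp add: mult.commute)
  then have "s (int p) (s (int e) x) \<in> L" using Pd unfolding P_def by simp
  moreover have "prime (int p)" using p(1) by simp
  ultimately show ?thesis by blast
qed

lemma order_p:
  fixes s :: "int \<Rightarrow> 'b::ab_group_add \<Rightarrow> 'b"
  assumes "module s" "module.subspace s L" "prime p"
    "\<forall>n x. s (n * n) x = 0 \<longrightarrow> s n x = 0"
  shows "m > 0 \<Longrightarrow> y \<notin> L \<Longrightarrow> s p y \<in> L \<Longrightarrow> s m y = 0 \<Longrightarrow> \<exists>y'. y' \<notin> L \<and> s p y' = 0"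
proof (induction "nat m" arbitrary: m y rule: less_induct)
  case less
  interpret M: module s by fact
  show ?case
  proof (cases "p dvd m")
    case False
    then have "y \<in> L" using bez_step[OF assms(1,2,3) False, of y] less.prems assms(2) M.subspace_0 by simp
    then show ?thesis using less.prems by blast
  next
    case True
    then obtain m2 where m2: "m = p * m2" by blast
    have p1: "p > 1" using assms(3) prime_gt_1_int by blast
    have m2pos: "m2 > 0" using m2 less.prems(1) p1 by (simp add: zero_less_mult_iff)
    show ?thesis
    proof (cases "p dvd m2")
      case True
      then obtain m3 where m3: "m2 = p * m3" by blast
      have "s (p * p) (s m3 y) = 0" using less.prems(4) m2 m3
        by (metis M.scale_scale mult.assoc mult.commute)
      then have "s p (s m3 y) = 0" using assms(4) by blast
      then have "s m2 y = 0" using m3 by simp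
      moreover have "nat m2 < nat m" using m2 m2pos p1 by simp
      ultimately show ?thesis using less.hyps less.prems m2pos by blast
    next
      case False
      have "s p (s m2 y) = 0" using less.prems(4) m2 by simp
      moreover have "s m2 y \<notin> L"
        using bez_step[OF assms(1,2,3) False, of y] less.prems by blast
      ultimately show ?thesis by blast
    qed
  qed
qed

lemma sq_ann:
  fixes s :: "int \<Rightarrow> 'b::ab_group_add \<Rightarrow> 'b"
  assumes "module s" "centrally_endo_AIP s" "s (n * n) x = 0"
  shows "s n x = 0"
proof -
  interpret M: module s by fact
  define N where "N = {y. s n y = 0}"
  have hn: "module_hom s s (\<lambda>y. s n y)" by simp
  have "M.subspace N" unfolding N_def using module_hom.subspace_kernel[OF hn] .
  moreover have "\<forall>f\<in>endo s. f ` N \<subseteq> N"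
  proof (intro ballI subsetI)
    fix f y assume f: "f \<in> endo s" and y: "y \<in> f ` N"
    then have fh: "module_hom s s f" unfolding endo_def by simp
    from y obtain u where u: "u \<in> N" "y = f u" by blast
    have "s n y = f (s n u)" using module_hom.scale[OF fh] u by simp
    also have "\<dots> = 0" using u(1) module_hom.zero[OF fh] unfolding N_def by simp
    finally show "y \<in> N" unfolding N_def by simp
  qed
  ultimately have "fully_invariant s N" unfolding fully_invariant_def by simp
  then have cs: "centrally_s_unital s (lann s N)" using assms(2) unfolding centrally_endo_AIP_def by blast
  have "(\<lambda>y. s n y) \<in> lann s N" unfolding lann_def endo_def N_def by simp
  then obtain z where z: "z \<in> lann s N" "(\<lambda>y. s n y) \<circ> z = (\<lambda>y. s n y)"
    using cs unfolding centrally_s_unital_def by blast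
  have zh: "module_hom s s z" using z(1) unfolding lann_def endo_def by simp
  have "s n x \<in> N" unfolding N_def using assms(3) by simp
  then have "z (s n x) = 0" using z(1) unfolding lann_def by blast
  moreover have "z (s n x) = s n (z x)" using module_hom.scale[OF zh] .
  moreover have "s n (z x) = s n x" using fun_cong[OF z(2), of x] by simp
  ultimately show ?thesis by simp
qed


lemma abs_ann:
  fixes s :: "int \<Rightarrow> 'b::ab_group_add \<Rightarrow> 'b"
  assumes "module s" "s m x = 0"
  shows "s \<bar>m\<bar> x = 0"
proof (cases "m \<ge> 0")
  case True then show ?thesis using assms(2) by simp
next
  case False
  interpret M: module s by fact
  have "s \<bar>m\<bar> x = - s m x" using False M.scale_minus_left[of m x] by simp
  then show ?thesis using assms(2) by simp
qed

theorem proposition2p9: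
  fixes s :: "int \<Rightarrow> 'b::ab_group_add \<Rightarrow> 'b"
  assumes "module s"
    and "fin_gen s"
    and "centrally_endo_AIP s"
  shows "torsion_free s \<or> semisimple s"
proof (cases "torsion_free s")
  case True then show ?thesis by simp
next
  case False
  note ms = assms(1)
  interpret M: module s by fact
  from False obtain r x where rx: "r \<noteq> 0" "s r x = 0" "x \<noteq> 0" unfolding torsion_free_def by blast
  have "x \<notin> {0}" "s r x \<in> {0}" using rx by auto
  then obtain p0 e0 where pe0: "prime p0" "s e0 x \<notin> {0}" "s p0 (s e0 x) \<in> {0}"
    using prime_mult[OF ms M.subspace_single_0 _ rx(1)] by blast
  have tors: "\<And>w. \<exists>n. n \<noteq> 0 \<and> s n w = 0"
    using all_torsion[OF assms pe0(1), of "s e0 x"] pe0 by blast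
  have sq: "\<forall>n x. s (n * n) x = 0 \<longrightarrow> s n x = 0" using sq_ann[OF ms assms(3)] by blast
  have "semisimple s"
    unfolding semisimple_def
  proof (intro allI impI)
    fix N assume Ns: "M.subspace N"
    define A where "A = {K. M.subspace K \<and> N \<inter> K = {0}}"
    have "{0} \<in> A" unfolding A_def using Ns M.subspace_0 by auto
    then have "A \<noteq> {}" by blast
    moreover have "\<And>C. C \<noteq> {} \<Longrightarrow> subset.chain A C \<Longrightarrow> \<Union>C \<in> A"
    proof -
      fix C assume C: "C \<noteq> {}" "subset.chain A C"
      then have CA: "C \<subseteq> A" "\<forall>X\<in>C. \<forall>Y\<in>C. X \<subseteq> Y \<or> Y \<subseteq> X" unfolding subset_chain_def by auto
      then have "M.subspace (\<Union>C)" using chain_union_subspace[OF ms C(1)] unfolding A_def by blast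
      moreover have "N \<inter> \<Union>C = {0}" using C(1) CA(1) unfolding A_def by blast
      ultimately show "\<Union>C \<in> A" unfolding A_def by blast
    qed
    ultimately obtain K where K: "K \<in> A" "\<And>X. X \<in> A \<Longrightarrow> K \<subseteq> X \<Longrightarrow> X = K"
      using subset_Zorn_nonempty[of A] by blast
    have Ks: "M.subspace K" and NK: "N \<inter> K = {0}" using K(1) unfolding A_def by auto
    define L where "L = {n + k | n k. n \<in> N \<and> k \<in> K}"
    have sN: "M.span N = N" using Ns by (rule M.span_eq_iff[THEN iffD2])
    have sK: "M.span K = K" using Ks by (rule M.span_eq_iff[THEN iffD2])
    have Lspan: "L = M.span (N \<union> K)" unfolding L_def M.span_Un sN sK by (rule refl)
    have Ls: "M.subspace L" unfolding Lspan by simp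
    have NL: "N \<subseteq> L"
    proof
      fix n assume "n \<in> N"
      moreover have "(0::'b) \<in> K" using Ks M.subspace_0 by blast
      ultimately have "n + 0 \<in> L" unfolding L_def by blast
      then show "n \<in> L" by simp
    qed
    have KL: "K \<subseteq> L"
    proof
      fix k assume "k \<in> K"
      moreover have "(0::'b) \<in> N" using Ns M.subspace_0 by blast
      ultimately have "0 + k \<in> L" unfolding L_def by blast
      then show "k \<in> L" by simp
    qed
    have "L = UNIV"
    proof (rule ccontr)
      assume "L \<noteq> UNIV"
      then obtain x where x: "x \<notin> L" by blast
      obtain m where m: "m \<noteq> 0" "s m x = 0" using tors by blast
      then have "s m x \<in> L" using Ls M.subspace_0 by simp
      then obtain p e where pe: "prime p" "s e x \<notin> L" "s p (s e x) \<in> L"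
        using prime_mult[OF ms Ls x m(1)] by blast
      define y where "y = s e x"
      obtain m' where m': "m' \<noteq> 0" "s m' y = 0" using tors by blast
      have "\<bar>m'\<bar> > 0" using m'(1) by simp
      moreover have "s \<bar>m'\<bar> y = 0" using abs_ann[OF ms m'(2)] .
      ultimately obtain y' where y': "y' \<notin> L" "s p y' = 0"
        using order_p[OF ms Ls pe(1) sq, of "\<bar>m'\<bar>" y] pe(2,3) unfolding y_def by blast
      define K' where "K' = M.span (insert y' K)"
      have K's: "M.subspace K'" unfolding K'_def by simp
      have KK': "K \<subseteq> K'" unfolding K'_def by (meson M.span_superset subset_insertI subset_trans)
      have yK': "y' \<in> K'" unfolding K'_def by (simp add: M.span_base)
      have spanK: "M.span K = K" using Ks by simp
      have "N \<inter> K' \<subseteq> {0}"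
      proof
        fix v assume v: "v \<in> N \<inter> K'"
        then obtain j where j: "v - s j y' \<in> K"
          unfolding K'_def using M.span_breakdown_eq spanK by blast
        show "v \<in> {0}"
        proof (cases "p dvd j")
          case True
          then obtain j' where "j = p * j'" by blast
          then have "s j y' = s j' (s p y')" by (simp add: mult.commute)
          then have "s j y' = 0" using y'(2) by simp
          then have "v \<in> K" using j by simp
          then show ?thesis using v NK by blast
        next
          case False
          have "v \<in> L" using v NL by blast
          moreover have "v - s j y' \<in> L" using j KL by blast
          ultimately have "v - (v - s j y') \<in> L" using Ls M.subspace_diff by blast
          then have "s j y' \<in> L" by simp
          moreover have "s p y' \<in> L" using y'(2) Ls M.subspace_0 by simp
          ultimately have "y' \<in> L" using bez_step[OF ms Ls pe(1) False] by blast
          then show ?thesis using y'(1) by blast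
        qed
      qed
      moreover have "0 \<in> N \<inter> K'" using Ns K's M.subspace_0 by blast
      ultimately have "K' \<in> A" unfolding A_def using K's by blast
      then have "K' = K" using K(2) KK' by blast
      then have "y' \<in> L" using yK' KL by blast
      then show False using y'(1) by blast
    qed
    then show "\<exists>K. M.subspace K \<and> N \<inter> K = {0} \<and> {n + k |n k. n \<in> N \<and> k \<in> K} = UNIV"
      using Ks NK L_def by blast
  qed
  then show ?thesis by simp
qed

end
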